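(* Let $\odot$ be a non-degenerate pseudo-multiplication and let $\phi$ be the supremum of the set of $\odot$-finite elements of $[0,\infty]$. Let $\tau$ be a $\sigma$-maxitive measure on a $\sigma$-algebra $\mathcal{B}$ on a nonempty set $E$ having the Radon–Nikodym property with respect to the idempotent $\odot$-integral. Then $\tau(E)\le\phi$.
   Context: Write $\overline{\mathbb{R}}_+=[0,\infty]$. A pseudo-multiplication is a binary operation $\odot$ on $\overline{\mathbb{R}}_+$ with the following properties: - it is associative; - it is continuous on $(0,\infty)\times[0,\infty]$; - for every $t$, the map $s\mapsto s\odot t$ is continuous on $(0,\infty]$; - it is nondecreasing in each argument; - it has a left identity $1_\odot$, i.e. $1_\odot\odot t=t$ for all $t$; - it has no zero divisors, i.e. $s\odot t=0$ implies $s=0$ or $t=0$; - $0\odot t=t\odot 0=0$ for all $t$. Put $O(t)=\inf_{s>0}s\odot t$. An element $t$ is $\odot$-finite if $O(t)=0$, and $\odot$-infinite otherwise. The operation $\odot$ is non-degenerate if $1_\odot$ is $\odot$-finite. A $\sigma$-maxitive measure on $\mathcal{B}$ is a map $\nu:\mathcal{B}\to\overline{\mathbb{R}}_+$ with $\nu(\emptyset)=0$ and $\nu(\bigcup_j B_j)=\sup_j\nu(B_j)$ for every countable family. A map $f:E\to\overline{\mathbb{R}}_+$ is $\mathcal{B}$-measurable if $\{f>t\}\in\mathcal{B}$ for all $t\in[0,\infty)$. The idempotent $\odot$-integral is $\int^\infty_B f\odot d\tau=\sup_{t\in[0,\infty)}t\odot\tau(B\cap\{f>t\})$. $\nu\ll_\odot\tau$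 means $\nu(B)\le\infty\odot\tau(B)$ for every $B\in\mathcal{B}$ with $\tau(B)$ $\odot$-finite. $\tau$ has the Radon–Nikodym property if every $\sigma$-maxitive $\nu\ll_\odot\tau$ admits a $\mathcal{B}$-measurable $c:E\to\overline{\mathbb{R}}_+$ with $\nu(B)=\int^\infty_B c\odot d\tau$ for all $B\in\mathcal{B}$. *)

theory Defs
  imports "HOL-Analysis.Analysis"
begin

text \<open>The extended half-line [0,\<infinity>] is modelled by the type ennreal.
  A pseudo-multiplication is given by the operation p together with a chosen
  left identity e (the element 1 of the paper).\<close>

definition pseudo_mult :: "(ennreal \<Rightarrow> ennreal \<Rightarrow> ennreal) \<Rightarrow> ennreal \<Rightarrow> bool" where
  "pseudo_mult p e \<longleftrightarrow>
     (\<forall>a b c. p (p a b) c = p a (p b c)) \<and>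
     continuous_on ({0<..<\<infinity>} \<times> UNIV) (\<lambda>(s, t). p s t) \<and>
     (\<forall>t. continuous_on {0<..} (\<lambda>s. p s t)) \<and>
     (\<forall>s s' t. s \<le> s' \<longrightarrow> p s t \<le> p s' t) \<and>
     (\<forall>s t t'. t \<le> t' \<longrightarrow> p s t \<le> p s t') \<and>
     (\<forall>t. p e t = t) \<and>
     (\<forall>s t. p s t = 0 \<longrightarrow> s = 0 \<or> t = 0) \<and>
     (\<forall>t. p 0 t = 0 \<and> p t 0 = 0)"

definition pm_O :: "(ennreal \<Rightarrow> ennreal \<Rightarrow> ennreal) \<Rightarrow> ennreal \<Rightarrow> ennreal" where
  "pm_O p t = (INF s\<in>{0<..}. p s t)"

definition pm_finite :: "(ennreal \<Rightarrow> ennreal \<Rightarrow> ennreal) \<Rightarrow> ennreal \<Rightarrow> bool" where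
  "pm_finite p t \<longleftrightarrow> pm_O p t = 0"

definition non_degenerate :: "(ennreal \<Rightarrow> ennreal \<Rightarrow> ennreal) \<Rightarrow> ennreal \<Rightarrow> bool" where
  "non_degenerate p e \<longleftrightarrow> pm_finite p e"

definition sigma_maxitive :: "'a set \<Rightarrow> 'a set set \<Rightarrow> ('a set \<Rightarrow> ennreal) \<Rightarrow> bool" where
  "sigma_maxitive E B \<nu> \<longleftrightarrow> \<nu> {} = 0 \<and>
     (\<forall>F :: nat \<Rightarrow> 'a set. range F \<subseteq> B \<longrightarrow> \<nu> (\<Union>j. F j) = (SUP j. \<nu> (F j)))"

definition B_measurable :: "'a set \<Rightarrow> 'a set set \<Rightarrow> ('a \<Rightarrow> ennreal) \<Rightarrow> bool" where
  "B_measurable E B f \<longleftrightarrow> (\<forall>t. t < \<infinity> \<longrightarrow> {x\<in>E. f x > t} \<in> B)"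

definition idem_integral ::
  "(ennreal \<Rightarrow> ennreal \<Rightarrow> ennreal) \<Rightarrow> 'a set \<Rightarrow> ('a \<Rightarrow> ennreal) \<Rightarrow> ('a set \<Rightarrow> ennreal) \<Rightarrow> 'a set \<Rightarrow> ennreal" where
  "idem_integral p E f \<tau> A = (SUP t\<in>{0..<\<infinity>}. p t (\<tau> (A \<inter> {x\<in>E. f x > t})))"

definition pm_abs_cont ::
  "(ennreal \<Rightarrow> ennreal \<Rightarrow> ennreal) \<Rightarrow> 'a set set \<Rightarrow> ('a set \<Rightarrow> ennreal) \<Rightarrow> ('a set \<Rightarrow> ennreal) \<Rightarrow> bool" where
  "pm_abs_cont p B \<nu> \<tau> \<longleftrightarrow> (\<forall>A\<in>B. pm_finite p (\<tau> A) \<longrightarrow> \<nu> A \<le> p \<infinity> (\<tau> A))"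

definition radon_nikodym_property ::
  "(ennreal \<Rightarrow> ennreal \<Rightarrow> ennreal) \<Rightarrow> 'a set \<Rightarrow> 'a set set \<Rightarrow> ('a set \<Rightarrow> ennreal) \<Rightarrow> bool" where
  "radon_nikodym_property p E B \<tau> \<longleftrightarrow>
     (\<forall>\<nu>. sigma_maxitive E B \<nu> \<and> pm_abs_cont p B \<nu> \<tau> \<longrightarrow>
        (\<exists>c. B_measurable E B c \<and> (\<forall>A\<in>B. \<nu> A = idem_integral p E c \<tau> A)))"

end

theory Submission
  imports Defs
begin

lemma ennreal_pos_ex_inv:
  assumes "(0::ennreal) < x" shows "\<exists>n::nat. ennreal (1 / Suc n) < x"
proof (cases x)
  case (real r)
  with assms have "r > 0" by auto
  then obtain n where "inverse (real (Suc n)) < r" using reals_Archimedean by blast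
  then have "1 / real (Suc n) < r" by (simp add: field_simps)
  then show ?thesis using real \<open>r>0\<close> by (intro exI[of _ n]) (simp add: ennreal_lessI)
next
  case top
  then show ?thesis by (intro exI[of _ 0]) simp
qed

theorem mainTheorem8:
  fixes p :: "ennreal \<Rightarrow> ennreal \<Rightarrow> ennreal" and e :: ennreal
    and E :: "'a set" and B :: "'a set set" and \<tau> :: "'a set \<Rightarrow> ennreal"
  assumes "pseudo_mult p e" and "non_degenerate p e"
    and "E \<noteq> {}" and "sigma_algebra E B"
    and "sigma_maxitive E B \<tau>"
    and "radon_nikodym_property p E B \<tau>"
  shows "\<tau> E \<le> Sup {t. pm_finite p t}"
proof (rule ccontr)
  define S where "S = Sup {t. pm_finite p t}"
  assume "\<not> \<tau> E \<le> Sup {t. pm_finite p t}"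
  then have "S < \<tau> E" unfolding S_def by simp
  then obtain y where y1: "S < y" and y2: "y < \<tau> E" using dense by blast
  have pmono: "\<And>s t t'. t \<le> t' \<Longrightarrow> p s t \<le> p s t'" and p0: "\<And>t. p t 0 = 0"
    using assms(1) unfolding pseudo_mult_def by auto
  have fin_le: "\<And>t. pm_finite p t \<Longrightarrow> t \<le> S" unfolding S_def by (rule Sup_upper) simp
  have "\<not> pm_finite p y" using fin_le y1 by force
  then have "pm_O p y > 0" unfolding pm_finite_def by (simp add: zero_less_iff_neq_zero)
  then obtain K where K0: "0 < K" and K1: "K < pm_O p y" using dense by blast
  have tau0: "\<tau> {} = 0" and taumax: "\<And>F :: nat \<Rightarrow> 'a set. range F \<subseteq> B \<Longrightarrow> \<tau> (\<Union>j. F j) = (SUP j. \<tau> (F j))"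
    using assms(5) unfolding sigma_maxitive_def by auto
  define \<nu> where "\<nu> A = (if \<tau> A > y then K else 0)" for A
  have "sigma_maxitive E B \<nu>"
    unfolding sigma_maxitive_def
  proof (intro conjI allI impI)
    show "\<nu> {} = 0" unfolding \<nu>_def using tau0 by simp
  next
    fix F :: "nat \<Rightarrow> 'a set" assume F: "range F \<subseteq> B"
    show "\<nu> (\<Union>j. F j) = (SUP j. \<nu> (F j))"
    proof (cases "y < (SUP j. \<tau> (F j))")
      case True
      then obtain j where j: "y < \<tau> (F j)" unfolding less_SUP_iff by blast
      have "(SUP j. \<nu> (F j)) = K"
      proof (rule antisym)
        show "(SUP j. \<nu> (F j)) \<le> K" by (rule SUP_least) (simp add: \<nu>_def)
        have "\<nu> (F j) = K" using j by (simp add: \<nu>_def)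
        then show "K \<le> (SUP j. \<nu> (F j))" by (metis SUP_upper UNIV_I)
      qed
      moreover have "\<nu> (\<Union>j. F j) = K" using True taumax[OF F] by (simp add: \<nu>_def)
      ultimately show ?thesis by simp
    next
      case False
      then have Sy: "(SUP j. \<tau> (F j)) \<le> y" by (simp add: not_less)
      have "\<And>j. \<tau> (F j) \<le> y" by (rule order_trans[OF SUP_upper Sy]) simp
      then have "\<And>j. \<not> y < \<tau> (F j)" by (simp add: not_less)
      then have "\<And>j. \<nu> (F j) = 0" by (simp add: \<nu>_def)
      moreover have "\<nu> (\<Union>j. F j) = 0" using False taumax[OF F] unfolding \<nu>_def by simp
      ultimately show ?thesis by simp
    qed
  qed
  moreover have "pm_abs_cont p B \<nu> \<tau>"
    unfolding pm_abs_cont_def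
  proof (intro ballI impI)
    fix A assume "A \<in> B" "pm_finite p (\<tau> A)"
    then have "\<tau> A \<le> S" using fin_le by blast
    then show "\<nu> A \<le> p \<infinity> (\<tau> A)" using y1 by (auto simp: \<nu>_def)
  qed
  moreover have "sigma_maxitive E B \<nu> \<and> pm_abs_cont p B \<nu> \<tau> \<longrightarrow>
        (\<exists>c. B_measurable E B c \<and> (\<forall>A\<in>B. \<nu> A = idem_integral p E c \<tau> A))"
    using assms(6) unfolding radon_nikodym_property_def by (rule spec)
  ultimately obtain c where cm: "B_measurable E B c"
    and cint: "\<And>A. A \<in> B \<Longrightarrow> \<nu> A = idem_integral p E c \<tau> A"
    by blast
  interpret sa: sigma_algebra E B by (rule assms(4))
  define At where "At t = {x\<in>E. c x > t}" for t
  have AtB: "\<And>t. t < \<infinity> \<Longrightarrow> At t \<in> B" using cm unfolding B_measurable_def At_def by auto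
  define Z where "Z = E - At 0"
  have ZB: "Z \<in> B" unfolding Z_def using AtB[of 0] sa.Diff sa.top by simp
  have "idem_integral p E c \<tau> Z = 0"
  proof -
    have "\<And>t. t \<ge> 0 \<Longrightarrow> Z \<inter> {x\<in>E. c x > t} = {}" unfolding Z_def At_def using order.strict_trans1[OF zero_le] by blast
    then show ?thesis unfolding idem_integral_def using tau0 p0 by simp
  qed
  then have "\<nu> Z = 0" using cint[OF ZB] by simp
  then have Zy: "\<tau> Z \<le> y" using K0 unfolding \<nu>_def by (auto split: if_splits)
  define F where "F n = (if n = 0 then Z else At (ennreal (1 / n)))" for n :: nat
  have FB: "range F \<subseteq> B" unfolding F_def using ZB AtB by auto
  have "(\<Union>n. F n) = E"
  proof
    show "(\<Union>n. F n) \<subseteq> E" unfolding F_def Z_def At_def by auto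
    show "E \<subseteq> (\<Union>n. F n)"
    proof
      fix x assume x: "x \<in> E"
      show "x \<in> (\<Union>n. F n)"
      proof (cases "c x > 0")
        case True
        then obtain n :: nat where "ennreal (1 / Suc n) < c x" using ennreal_pos_ex_inv by blast
        then have "x \<in> F (Suc n)" unfolding F_def At_def using x by (simp del: of_nat_Suc)
        then show ?thesis by blast
      next
        case False
        then have "x \<in> F 0" unfolding F_def Z_def At_def using x by auto
        then show ?thesis by blast
      qed
    qed
  qed
  then have "y < (SUP n. \<tau> (F n))" using taumax[OF FB] y2 by simp
  then obtain n where n: "y < \<tau> (F n)" unfolding less_SUP_iff by blast
  with Zy have "n \<noteq> 0" unfolding F_def by (cases "n = 0") auto
  define t where "t = ennreal (1 / n)"
  have t0: "t > 0" "t < \<infinity>" using \<open>n \<noteq> 0\<close> unfolding t_def by auto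
  have ty: "y < \<tau> (At t)" using n \<open>n \<noteq> 0\<close> unfolding F_def t_def by simp
  have "\<nu> (At t) = K" using ty unfolding \<nu>_def by simp
  moreover have "\<nu> (At t) = idem_integral p E c \<tau> (At t)" using cint AtB t0 by blast
  moreover have "p t (\<tau> (At t)) \<le> idem_integral p E c \<tau> (At t)"
  proof -
    have "At t \<inter> {x\<in>E. c x > t} = At t" unfolding At_def by auto
    then show ?thesis unfolding idem_integral_def using t0
      by (intro SUP_upper2[of t]) auto
  qed
  moreover have "pm_O p y \<le> p t y" unfolding pm_O_def using t0 by (intro INF_lower) auto
  moreover have "p t y \<le> p t (\<tau> (At t))" using ty by (intro pmono) simp
  ultimately show False using K1 by simp
qed

end
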